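(* Consider the all-to-all Kuramoto model $\dot\theta_i=\omega_i+\frac KN\sum_{j=1}^N\sin(\theta_j-\theta_i)$, $i=1,\dots,N$, with $\omega_{\max}=\max_i\omega_i$, $\omega_{\min}=\min_i\omega_i$. Let $\epsilon\in(0,\pi/4)$ and $\mathcal D=\{\theta\in\mathbb R^N: |\theta_i-\theta_j|\le\frac\pi2-2\epsilon\ \forall i,j\}$. If $\theta(0)\in\mathcal D$ and $K>\frac{N(\omega_{\max}-\omega_{\min})}{2\cos(2\epsilon)}$, then the oscillators asymptotically frequency synchronize: $\dot\theta_i(t)-\dot\theta_j(t)\to0$ as $t\to\infty$ for all $i,j=1,\dots,N$. *)

theory Defs
  imports "HOL-Analysis.Analysis"
begin

end

theory Submission
  imports Defs
begin

lemma alg: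
  fixes N :: nat and K :: real and \<omega> :: "nat \<Rightarrow> real" and a :: "nat \<Rightarrow> nat \<Rightarrow> real" and n :: "nat \<Rightarrow> real" and w :: real
  assumes anti: "\<And>i j. a j i = - a i j"
    and nd: "\<And>i. n i = \<omega> i + K / real N * (\<Sum>j<N. a i j)"
    and Npos: "N > 0" and wd: "w = (\<Sum>i<N. \<omega> i) / real N"
  shows "-(\<Sum>i<N. (\<omega> i - w) * (n i - n 0)) - K / (2 * real N) * (\<Sum>i<N. \<Sum>j<N. -(a i j) * (n j - n i))
       = -(\<Sum>i<N. (n i - w)^2)"
proof -
  have S1: "(\<Sum>i<N. \<Sum>j<N. a i j * n j) = -(\<Sum>i<N. \<Sum>j<N. a i j * n i)"
  proof -
    have "(\<Sum>i<N. \<Sum>j<N. a i j * n j) = (\<Sum>j<N. \<Sum>i<N. a i j * n j)" by (rule sum.swap)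
    also have "\<dots> = (\<Sum>j<N. \<Sum>i<N. - (a j i * n j))"
      by (intro sum.cong refl) (metis anti minus_mult_left)
    finally show ?thesis by (simp add: sum_negf)
  qed
  have S2: "(\<Sum>i<N. \<Sum>j<N. a i j) = 0"
  proof -
    have "(\<Sum>i<N. \<Sum>j<N. a i j) = (\<Sum>j<N. \<Sum>i<N. a i j)" by (rule sum.swap)
    also have "\<dots> = (\<Sum>j<N. \<Sum>i<N. - a j i)"
      by (intro sum.cong refl) (metis anti)
    finally show ?thesis by (simp add: sum_negf)
  qed
  have S3: "(\<Sum>i<N. n i) = (\<Sum>i<N. \<omega> i)"
  proof -
    have "(\<Sum>i<N. n i) = (\<Sum>i<N. \<omega> i) + K / real N * (\<Sum>i<N. \<Sum>j<N. a i j)"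
      by (simp add: nd sum.distrib sum_distrib_left)
    thus ?thesis using S2 by simp
  qed
  have Nw: "(\<Sum>i<N. \<omega> i) = real N * w" using Npos wd by simp
  have S4: "(\<Sum>i<N. (\<omega> i - w)) = 0" using Nw by (simp add: sum_subtractf)
  have T1: "(\<Sum>i<N. (\<omega> i - w) * (n i - n 0)) = (\<Sum>i<N. (\<omega> i - w) * n i)"
  proof -
    have "(\<Sum>i<N. (\<omega> i - w) * (n i - n 0)) = (\<Sum>i<N. (\<omega> i - w) * n i) - (\<Sum>i<N. (\<omega> i - w) * n 0)"
      by (simp only: right_diff_distrib sum_subtractf)
    also have "(\<Sum>i<N. (\<omega> i - w) * n 0) = (\<Sum>i<N. (\<omega> i - w)) * n 0"
      by (rule sum_distrib_right[symmetric])
    finally show ?thesis using S4 by simp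
  qed
  have T2: "(\<Sum>i<N. \<Sum>j<N. -(a i j) * (n j - n i)) = 2 * (\<Sum>i<N. n i * (\<Sum>j<N. a i j))"
  proof -
    have "(\<Sum>i<N. \<Sum>j<N. -(a i j) * (n j - n i)) = (\<Sum>i<N. \<Sum>j<N. a i j * n i) - (\<Sum>i<N. \<Sum>j<N. a i j * n j)"
      by (simp add: algebra_simps sum_subtractf)
    also have "\<dots> = 2 * (\<Sum>i<N. \<Sum>j<N. a i j * n i)" using S1 by simp
    also have "(\<Sum>i<N. \<Sum>j<N. a i j * n i) = (\<Sum>i<N. n i * (\<Sum>j<N. a i j))"
      by (simp add: sum_distrib_left mult.commute)
    finally show ?thesis .
  qed
  have T3: "K / (2 * real N) * (2 * (\<Sum>i<N. n i * (\<Sum>j<N. a i j))) = (\<Sum>i<N. n i * (n i - \<omega> i))"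
  proof -
    have "K / (2 * real N) * (2 * (\<Sum>i<N. n i * (\<Sum>j<N. a i j))) = (\<Sum>i<N. n i * (K / real N * (\<Sum>j<N. a i j)))"
      by (simp add: sum_distrib_left algebra_simps)
    also have "\<dots> = (\<Sum>i<N. n i * (n i - \<omega> i))" by (simp add: nd)
    finally show ?thesis .
  qed
  have "-(\<Sum>i<N. (\<omega> i - w) * (n i - n 0)) - K / (2 * real N) * (\<Sum>i<N. \<Sum>j<N. -(a i j) * (n j - n i))
      = -(\<Sum>i<N. (\<omega> i - w) * n i) - (\<Sum>i<N. n i * (n i - \<omega> i))"
    using T1 T2 T3 by simp
  also have "\<dots> = -(\<Sum>i<N. n i ^ 2) + w * (\<Sum>i<N. n i)"
    by (simp add: sum_distrib_left power2_eq_square algebra_simps sum.distrib sum_subtractf)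
  also have "\<dots> = -(\<Sum>i<N. (n i - w)^2)"
  proof -
    have e1: "(\<Sum>i<N. (n i - w)^2) = (\<Sum>i<N. n i ^ 2) + real N * w^2 - (\<Sum>i<N. 2 * n i * w)"
      by (simp add: power2_diff sum.distrib sum_subtractf)
    have e2: "(\<Sum>i<N. 2 * n i * w) = (\<Sum>i<N. n i) * (2 * w)"
      by (subst sum_distrib_right) (simp add: mult_ac)
    show ?thesis using e1 e2 S3 Nw by (simp add: power2_eq_square algebra_simps)
  qed
  finally show ?thesis .
qed


locale kur =
  fixes N :: nat and \<omega> :: "nat \<Rightarrow> real" and K \<epsilon> :: real
    and \<theta> :: "real \<Rightarrow> nat \<Rightarrow> real"
  assumes Npos: "0 < N"
    and eps: "0 < \<epsilon>" "\<epsilon> < pi / 4"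
    and ode: "\<forall>i<N. \<forall>t\<ge>0. ((\<lambda>s. \<theta> s i) has_real_derivative
               (\<omega> i + K / real N * (\<Sum>j<N. sin (\<theta> t j - \<theta> t i)))) (at t within {0..})"
    and init: "\<forall>i<N. \<forall>j<N. \<bar>\<theta> 0 i - \<theta> 0 j\<bar> \<le> pi / 2 - 2 * \<epsilon>"
    and Kc: "K > real N * (Max (\<omega> ` {..<N}) - Min (\<omega> ` {..<N})) / (2 * cos (2 * \<epsilon>))"
begin

definition nu :: "nat \<Rightarrow> real \<Rightarrow> real" where
  "nu i t = \<omega> i + K / real N * (\<Sum>j<N. sin (\<theta> t j - \<theta> t i))"

definition c :: real where "c = pi / 2 - 2 * \<epsilon>"

lemma c_pos: "0 < c" and c_le: "c < pi/2"
  using eps by (auto simp: c_def)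

lemma cos2e: "cos (2*\<epsilon>) > 0" "sin c = cos (2*\<epsilon>)"
proof -
  show "cos (2*\<epsilon>) > 0" using eps by (intro cos_gt_zero_pi) auto
  show "sin c = cos (2*\<epsilon>)" by (simp add: c_def sin_diff)
qed

lemma dw: "\<omega> i - \<omega> j \<le> Max (\<omega> ` {..<N}) - Min (\<omega> ` {..<N})" if "i < N" "j < N"
proof -
  have "\<omega> i \<le> Max (\<omega> ` {..<N})" using that by (intro Max_ge) auto
  moreover have "\<omega> j \<ge> Min (\<omega> ` {..<N})" using that by (intro Min_le) auto
  ultimately show ?thesis by linarith
qed

lemma Kpos: "K > 0"
proof -
  have "0 \<le> Max (\<omega> ` {..<N}) - Min (\<omega> ` {..<N})" using dw[of 0 0] Npos by auto
  hence "0 \<le> real N * (Max (\<omega> ` {..<N}) - Min (\<omega> ` {..<N})) / (2 * cos (2 * \<epsilon>))"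
    using cos2e by auto
  thus ?thesis using Kc by linarith
qed

lemma der: "i < N \<Longrightarrow> t \<ge> 0 \<Longrightarrow> ((\<lambda>s. \<theta> s i) has_real_derivative nu i t) (at t within {0..})"
  using ode by (auto simp: nu_def)

lemma der_at: "i < N \<Longrightarrow> t > 0 \<Longrightarrow> ((\<lambda>s. \<theta> s i) has_real_derivative nu i t) (at t)"
proof -
  assume a: "i < N" "t > 0"
  have "((\<lambda>s. \<theta> s i) has_real_derivative nu i t) (at t within {0<..})"
    using a by (intro has_field_derivative_subset[OF der]) auto
  thus ?thesis using a at_within_open[of t "{0<..}"] by auto
qed

lemma cont: "i < N \<Longrightarrow> continuous_on {0..} (\<lambda>s. \<theta> s i)"
  by (rule DERIV_continuous_on[OF der]) auto

lemma boundary: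
  assumes P: "\<forall>k<N. \<forall>l<N. \<theta> t k - \<theta> t l \<le> c"
    and eq: "\<theta> t i - \<theta> t j = c" and ij: "i < N" "j < N"
  shows "nu i t - nu j t < 0"
proof -
  have ij': "i \<noteq> j" using eq c_pos by auto
  define f where "f k = sin (\<theta> t k - \<theta> t i) - sin (\<theta> t k - \<theta> t j)" for k
  have nd: "nu i t - nu j t = \<omega> i - \<omega> j + K / real N * (\<Sum>k<N. f k)"
    by (simp add: nu_def f_def sum_subtractf algebra_simps)
  have fk: "f k \<le> 0" if k: "k < N" for k
  proof -
    have a1: "0 \<le> \<theta> t i - \<theta> t k" using P[rule_format, OF k ij(2)] eq by linarith
    have a2: "\<theta> t i - \<theta> t k \<le> pi" using P[rule_format, OF ij(1) k] c_le pi_gt_zero by linarith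
    have "0 \<le> sin (\<theta> t i - \<theta> t k)" using a1 a2 by (rule sin_ge_zero)
    hence s1: "sin (\<theta> t k - \<theta> t i) \<le> 0" by (metis minus_diff_eq sin_minus neg_0_le_iff_le)
    have b1: "0 \<le> \<theta> t k - \<theta> t j" using P[rule_format, OF ij(1) k] eq by linarith
    have b2: "\<theta> t k - \<theta> t j \<le> pi" using P[rule_format, OF k ij(2)] c_le pi_gt_zero by linarith
    have "0 \<le> sin (\<theta> t k - \<theta> t j)" using b1 b2 by (rule sin_ge_zero)
    thus ?thesis using s1 by (simp add: f_def)
  qed
  have fi: "f i = - sin c" using eq by (simp add: f_def)
  have "\<theta> t j - \<theta> t i = - c" using eq by linarith
  hence fj: "f j = - sin c" by (simp add: f_def)
  have "(\<Sum>k<N. f k) = (\<Sum>k\<in>{..<N} - {i,j}. f k) + (\<Sum>k\<in>{i,j}. f k)"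
    using ij by (intro sum.subset_diff) auto
  also have "(\<Sum>k\<in>{i,j}. f k) = f i + f j" using ij' by simp
  also have "(\<Sum>k\<in>{..<N} - {i,j}. f k) \<le> 0" using fk by (intro sum_nonpos) auto
  finally have sm: "(\<Sum>k<N. f k) \<le> - 2 * cos (2*\<epsilon>)" using fi fj cos2e by simp
  have KN: "K / real N \<ge> 0" using Kpos by simp
  have "K / real N * (\<Sum>k<N. f k) \<le> K / real N * (- 2 * cos (2*\<epsilon>))"
    using sm KN by (rule mult_left_mono)
  moreover have "K * (2 * cos (2 * \<epsilon>)) > real N * (Max (\<omega> ` {..<N}) - Min (\<omega> ` {..<N}))"
    using Kc cos2e by (simp add: pos_divide_less_eq)
  hence "K / real N * (2 * cos (2 * \<epsilon>)) > (Max (\<omega> ` {..<N}) - Min (\<omega> ` {..<N}))"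
    using Npos by (simp add: field_simps)
  ultimately show ?thesis using nd dw[OF ij] by linarith
qed

lemma invariant:
  assumes "t1 \<ge> 0"
  shows "\<forall>i<N. \<forall>j<N. \<theta> t1 i - \<theta> t1 j \<le> c"
proof (rule ccontr)
  assume nP: "\<not> ?thesis"
  define P where "P t \<longleftrightarrow> (\<forall>i<N. \<forall>j<N. \<theta> t i - \<theta> t j \<le> c)" for t
  define S where "S = {t \<in> {0..t1}. P t}"
  have S_eq: "S = {0..t1} \<inter> (\<Inter>i\<in>{..<N}. \<Inter>j\<in>{..<N}. {t \<in> {0..t1}. \<theta> t i - \<theta> t j \<le> c})"
    by (auto simp: S_def P_def)
  have contd: "continuous_on {0..t1} (\<lambda>t. \<theta> t i - \<theta> t j)" if "i < N" "j < N" for i j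
    using cont[OF that(1)] cont[OF that(2)]
    by (intro continuous_intros) (auto intro: continuous_on_subset)
  have "closed S" unfolding S_eq
    by (intro closed_Int closed_INT ballI continuous_on_closed_Collect_le contd continuous_on_const) auto
  moreover have "0 \<in> S" using init assms by (force simp: S_def P_def c_def abs_le_iff)
  moreover have bdd: "bdd_above S" by (auto simp: S_def intro!: bdd_aboveI[of _ t1])
  ultimately have sS: "Sup S \<in> S" by (intro closed_contains_Sup) auto
  define s where "s = Sup S"
  have s0: "0 \<le> s" "s \<le> t1" and Ps: "P s" using sS by (auto simp: S_def s_def)
  have "s \<noteq> t1" using Ps nP by (auto simp: P_def)
  hence st: "s < t1" using s0 by simp
  have ev: "eventually (\<lambda>x. \<theta> x i - \<theta> x j \<le> c) (at_right s)" if ij: "i < N" "j < N" for i j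
  proof (cases "\<theta> s i - \<theta> s j < c")
    case True
    have "continuous (at s within {0..}) (\<lambda>t. \<theta> t i - \<theta> t j)"
      using cont[OF ij(1)] cont[OF ij(2)] s0
      by (intro continuous_intros) (auto simp: continuous_on_eq_continuous_within)
    hence "((\<lambda>t. \<theta> t i - \<theta> t j) \<longlongrightarrow> \<theta> s i - \<theta> s j) (at s within {0..})"
      by (simp add: continuous_within)
    hence "eventually (\<lambda>x. \<theta> x i - \<theta> x j < c) (at s within {0..})"
      using True by (rule order_tendstoD)
    moreover have "at_right s \<le> at s within {0..}" using s0 by (intro at_le) auto
    ultimately have "eventually (\<lambda>x. \<theta> x i - \<theta> x j < c) (at_right s)"
      by (rule filter_leD[rotated])
    thus ?thesis by (rule eventually_mono) auto
  next
    case False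
    hence eq: "\<theta> s i - \<theta> s j = c" using Ps ij unfolding P_def by force
    have d: "((\<lambda>t. \<theta> t i - \<theta> t j) has_real_derivative (nu i s - nu j s)) (at s within {0..})"
      using der[OF ij(1) s0(1)] der[OF ij(2) s0(1)] by (rule DERIV_diff)
    have "nu i s - nu j s < 0" using boundary[of s i j] Ps eq ij by (auto simp: P_def)
    from has_real_derivative_neg_dec_right[OF d this]
    obtain d where d: "d > 0" "\<And>h. h > 0 \<Longrightarrow> s + h \<in> {0..} \<Longrightarrow> h < d \<Longrightarrow>
       \<theta> (s+h) i - \<theta> (s+h) j < \<theta> s i - \<theta> s j" by blast
    show ?thesis unfolding eventually_at_right_field
    proof (intro exI[of _ "s + d"] conjI allI impI)
      fix y assume "s < y" "y < s + d"
      thus "\<theta> y i - \<theta> y j \<le> c" using d(2)[of "y - s"] s0 eq by auto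
    qed (use d in auto)
  qed
  have "eventually (\<lambda>x. \<forall>i\<in>{..<N}. \<forall>j\<in>{..<N}. \<theta> x i - \<theta> x j \<le> c) (at_right s)"
    using ev by (intro eventually_ball_finite ballI) auto
  moreover have "eventually (\<lambda>x. x < t1) (at_right s)"
    unfolding eventually_at_right_field using st by auto
  ultimately have "eventually (\<lambda>x. (\<forall>i\<in>{..<N}. \<forall>j\<in>{..<N}. \<theta> x i - \<theta> x j \<le> c) \<and> x < t1) (at_right s)"
    by (rule eventually_conj)
  then obtain b where b: "b > s" "\<And>y. y > s \<Longrightarrow> y < b \<Longrightarrow>
     (\<forall>i\<in>{..<N}. \<forall>j\<in>{..<N}. \<theta> y i - \<theta> y j \<le> c) \<and> y < t1"
    unfolding eventually_at_right_field by blast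
  define y where "y = (s + b) / 2"
  have "y \<in> S" using b(2)[of y] b(1) s0 by (auto simp: y_def S_def P_def)
  hence "y \<le> s" unfolding s_def using bdd by (rule cSup_upper)
  thus False using b(1) by (simp add: y_def)
qed

lemma inv_abs: "t \<ge> 0 \<Longrightarrow> i < N \<Longrightarrow> j < N \<Longrightarrow> \<bar>\<theta> t i - \<theta> t j\<bar> \<le> c"
  using invariant[of t] by (auto simp: abs_le_iff)

definition B :: real where "B = Max ((\<lambda>i. \<bar>\<omega> i\<bar>) ` {..<N}) + K"

lemma nu_bound: "i < N \<Longrightarrow> \<bar>nu i t\<bar> \<le> B"
proof -
  assume i: "i < N"
  have w: "\<bar>\<omega> i\<bar> \<le> Max ((\<lambda>i. \<bar>\<omega> i\<bar>) ` {..<N})" using i by (intro Max_ge) auto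
  have "\<bar>\<Sum>j<N. sin (\<theta> t j - \<theta> t i)\<bar> \<le> (\<Sum>j<N. \<bar>sin (\<theta> t j - \<theta> t i)\<bar>)"
    by (rule sum_abs)
  also have "\<dots> \<le> (\<Sum>j<N. 1)" by (intro sum_mono) auto
  finally have sb: "\<bar>\<Sum>j<N. sin (\<theta> t j - \<theta> t i)\<bar> \<le> real N" by simp
  have "\<bar>K / real N * (\<Sum>j<N. sin (\<theta> t j - \<theta> t i))\<bar> = K / real N * \<bar>\<Sum>j<N. sin (\<theta> t j - \<theta> t i)\<bar>"
    using Kpos by (simp add: abs_mult)
  also have "\<dots> \<le> K / real N * real N" using sb Kpos by (intro mult_left_mono) auto
  also have "\<dots> = K" using Npos by simp
  finally have k: "\<bar>K / real N * (\<Sum>j<N. sin (\<theta> t j - \<theta> t i))\<bar> \<le> K" .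
  have "\<bar>nu i t\<bar> \<le> \<bar>\<omega> i\<bar> + \<bar>K / real N * (\<Sum>j<N. sin (\<theta> t j - \<theta> t i))\<bar>"
    unfolding nu_def by (rule abs_triangle_ineq)
  thus ?thesis using w k unfolding B_def by linarith
qed

lemma theta_lip:
  assumes "0 < a" "a \<le> b" "i < N"
  shows "\<bar>\<theta> b i - \<theta> a i\<bar> \<le> B * (b - a)"
proof (cases "a = b")
  case False
  hence "a < b" using assms by simp
  from MVT2[OF this, of "\<lambda>s. \<theta> s i" "nu i"] der_at[OF assms(3)] assms
  obtain z where "\<theta> b i - \<theta> a i = (b - a) * nu i z" by force
  hence "\<bar>\<theta> b i - \<theta> a i\<bar> = (b - a) * \<bar>nu i z\<bar>" using assms by (simp add: abs_mult)
  also have "\<dots> \<le> (b - a) * B" using nu_bound[OF assms(3)] assms by (intro mult_left_mono) auto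
  finally show ?thesis by (simp add: mult.commute)
qed simp

lemma sin_lip: "\<bar>sin x - sin y\<bar> \<le> \<bar>x - y\<bar>" for x y :: real
proof -
  have "\<bar>sin x - sin y\<bar> = 2 * \<bar>sin ((x - y) / 2)\<bar> * \<bar>cos ((x + y) / 2)\<bar>"
    by (simp add: sin_diff_sin abs_mult)
  also have "\<dots> \<le> 2 * \<bar>(x - y) / 2\<bar> * 1"
    by (intro mult_mono abs_sin_x_le_abs_x abs_cos_le_one) auto
  finally show ?thesis by simp
qed

lemma nu_lip:
  assumes "0 < a" "a \<le> b" "i < N"
  shows "\<bar>nu i b - nu i a\<bar> \<le> 2 * K * B * (b - a)"
proof -
  have "nu i b - nu i a = K / real N * (\<Sum>j<N. sin (\<theta> b j - \<theta> b i) - sin (\<theta> a j - \<theta> a i))"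
    by (simp add: nu_def sum_subtractf algebra_simps)
  hence "\<bar>nu i b - nu i a\<bar> = K / real N * \<bar>\<Sum>j<N. sin (\<theta> b j - \<theta> b i) - sin (\<theta> a j - \<theta> a i)\<bar>"
    using Kpos by (simp add: abs_mult)
  also have "\<dots> \<le> K / real N * (\<Sum>j<N. 2 * B * (b - a))"
  proof (intro mult_left_mono order.trans[OF sum_abs] sum_mono)
    fix j assume j: "j \<in> {..<N}"
    have "\<bar>sin (\<theta> b j - \<theta> b i) - sin (\<theta> a j - \<theta> a i)\<bar>
        \<le> \<bar>(\<theta> b j - \<theta> b i) - (\<theta> a j - \<theta> a i)\<bar>"
      by (rule sin_lip)
    also have "\<dots> = \<bar>(\<theta> b j - \<theta> a j) - (\<theta> b i - \<theta> a i)\<bar>"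
      by (rule arg_cong[where f=abs]) simp
    also have "\<dots> \<le> \<bar>\<theta> b j - \<theta> a j\<bar> + \<bar>\<theta> b i - \<theta> a i\<bar>" by (rule abs_triangle_ineq4)
    also have "\<dots> \<le> B * (b - a) + B * (b - a)"
      using theta_lip[OF assms(1,2)] j assms(3) by (intro add_mono) auto
    finally show "\<bar>sin (\<theta> b j - \<theta> b i) - sin (\<theta> a j - \<theta> a i)\<bar> \<le> 2 * B * (b - a)" by (simp add: algebra_simps)
  qed (use Kpos in auto)
  also have "\<dots> = 2 * K * B * (b - a)" using Npos by simp
  finally show ?thesis .
qed


definition w :: real where "w = (\<Sum>i<N. \<omega> i) / real N"
definition V :: "real \<Rightarrow> real" where
  "V t = -(\<Sum>i<N. (\<omega> i - w) * (\<theta> t i - \<theta> t 0)) - K / (2 * real N) * (\<Sum>i<N. \<Sum>j<N. cos (\<theta> t j - \<theta> t i))"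
definition h :: "real \<Rightarrow> real" where "h t = (\<Sum>i<N. (nu i t - w)^2)"

lemma V_der:
  assumes t: "t > 0"
  shows "DERIV V t :> - h t"
proof -
  have d0: "DERIV (\<lambda>s. \<theta> s i) t :> nu i t" if "i < N" for i using der_at[OF that t] .
  have dc: "DERIV (\<lambda>s. cos (\<theta> s j - \<theta> s i)) t :> -(sin (\<theta> t j - \<theta> t i)) * (nu j t - nu i t)"
    if "i < N" "j < N" for i j
    using DERIV_chain2[OF DERIV_cos DERIV_diff[OF d0[OF that(2)] d0[OF that(1)]]] by simp
  have dd: "DERIV (\<lambda>s. (\<omega> i - w) * (\<theta> s i - \<theta> s 0)) t :> (\<omega> i - w) * (nu i t - nu 0 t)"
    if "i < N" for i
    using that Npos by (intro DERIV_cmult DERIV_diff d0) auto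
  have "DERIV V t :> -(\<Sum>i<N. (\<omega> i - w) * (nu i t - nu 0 t))
      - K / (2 * real N) * (\<Sum>i<N. \<Sum>j<N. -(sin (\<theta> t j - \<theta> t i)) * (nu j t - nu i t))"
    unfolding V_def
    by (intro DERIV_diff DERIV_minus DERIV_cmult DERIV_sum dd dc) auto
  moreover have "-(\<Sum>i<N. (\<omega> i - w) * (nu i t - nu 0 t))
      - K / (2 * real N) * (\<Sum>i<N. \<Sum>j<N. -(sin (\<theta> t j - \<theta> t i)) * (nu j t - nu i t)) = - h t"
    unfolding h_def
    by (rule alg[where a = "\<lambda>i j. sin (\<theta> t j - \<theta> t i)"])
       (auto simp: nu_def w_def Npos simp flip: sin_minus)
  ultimately show ?thesis by simp
qed

lemma h_nonneg: "h t \<ge> 0" by (simp add: h_def sum_nonneg)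

lemma V_mono: "0 < a \<Longrightarrow> a \<le> b \<Longrightarrow> V b \<le> V a"
proof -
  assume ab: "0 < a" "a \<le> b"
  show "V b \<le> V a"
  proof (rule DERIV_nonpos_imp_nonincreasing[of a b V])
    fix x assume "a \<le> x" "x \<le> b"
    hence "x > 0" using ab by simp
    thus "\<exists>y. DERIV V x :> y \<and> y \<le> 0" using V_der h_nonneg by (intro exI[of _ "- h x"]) auto
  qed (use ab in auto)
qed

definition Lb :: real where "Lb = -(\<Sum>i<N. \<bar>\<omega> i - w\<bar> * c) - K / (2 * real N) * (real N * real N)"

lemma V_lower: "t \<ge> 0 \<Longrightarrow> Lb \<le> V t"
proof -
  assume t: "t \<ge> 0"
  have "(\<Sum>i<N. (\<omega> i - w) * (\<theta> t i - \<theta> t 0)) \<le> (\<Sum>i<N. \<bar>\<omega> i - w\<bar> * c)"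
  proof (intro sum_mono)
    fix i assume i: "i \<in> {..<N}"
    have "(\<omega> i - w) * (\<theta> t i - \<theta> t 0) \<le> \<bar>\<omega> i - w\<bar> * \<bar>\<theta> t i - \<theta> t 0\<bar>"
      by (metis abs_ge_self abs_mult)
    also have "\<dots> \<le> \<bar>\<omega> i - w\<bar> * c" using inv_abs[OF t] i Npos by (intro mult_left_mono) auto
    finally show "(\<omega> i - w) * (\<theta> t i - \<theta> t 0) \<le> \<bar>\<omega> i - w\<bar> * c" .
  qed
  moreover have "(\<Sum>i<N. \<Sum>j<N. cos (\<theta> t j - \<theta> t i)) \<le> (\<Sum>i<N. \<Sum>j<N. (1::real))"
    by (intro sum_mono) auto
  hence "K / (2 * real N) * (\<Sum>i<N. \<Sum>j<N. cos (\<theta> t j - \<theta> t i)) \<le> K / (2 * real N) * (real N * real N)"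
    using Kpos by (intro mult_left_mono) auto
  ultimately show ?thesis unfolding V_def Lb_def by linarith
qed

lemma B_pos: "B > 0"
proof -
  have "\<bar>\<omega> 0\<bar> \<le> Max ((\<lambda>i. \<bar>\<omega> i\<bar>) ` {..<N})" using Npos by (intro Max_ge) auto
  thus ?thesis using Kpos unfolding B_def by linarith
qed

lemma nu_conv:
  assumes i: "i < N"
  shows "((\<lambda>t. nu i t - w) \<longlongrightarrow> 0) at_top"
proof (rule tendstoI)
  fix e :: real assume e: "e > 0"
  define L where "L = 2 * K * B + 1"
  have L: "L > 0" unfolding L_def using mult_pos_pos[OF Kpos B_pos] by (simp add: mult.assoc)
  define \<delta> where "\<delta> = e / (2 * L)"
  have \<delta>: "\<delta> > 0" using e L by (simp add: \<delta>_def)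
  define \<eta> where "\<eta> = \<delta> * (e^2 / 4)"
  have \<eta>: "\<eta> > 0" using \<delta> e by (simp add: \<eta>_def)
  define m where "m = Inf (V ` {1..})"
  have bdd: "bdd_below (V ` {1..})" using V_lower by (intro bdd_belowI[of _ Lb]) auto
  have "Inf (V ` {1..}) < m + \<eta>" using \<eta> by (simp add: m_def)
  from cInf_lessD[OF _ this] obtain T where T: "T \<ge> 1" "V T < m + \<eta>" by auto
  have "\<forall>t\<ge>T. dist (nu i t - w) 0 < e"
  proof (intro allI impI)
    fix t assume tT: "t \<ge> T"
    show "dist (nu i t - w) 0 < e"
    proof (rule ccontr)
      assume "\<not> ?thesis"
      hence big: "\<bar>nu i t - w\<bar> \<ge> e" by simp
      have hz: "h z \<ge> e^2 / 4" if z: "t \<le> z" "z \<le> t + \<delta>" for z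
      proof -
        have "\<bar>nu i z - nu i t\<bar> \<le> 2 * K * B * (z - t)" using nu_lip[of t z i] z tT T i by auto
        also have "\<dots> \<le> L * \<delta>" unfolding L_def using z Kpos B_pos \<delta>
          by (intro mult_mono) (auto simp: algebra_simps)
        also have "\<dots> = e / 2" using L by (simp add: \<delta>_def)
        finally have "e / 2 \<le> \<bar>nu i z - w\<bar>" using big by linarith
        hence "(e / 2)^2 \<le> \<bar>nu i z - w\<bar>^2" using e by (intro power_mono) auto
        hence "e^2 / 4 \<le> (nu i z - w)^2" by (simp add: power_divide)
        also have "\<dots> \<le> h z" unfolding h_def using i by (intro member_le_sum) auto
        finally show ?thesis .
      qed
      have "t < t + \<delta>" using \<delta> by simp
      from MVT2[OF this, of V "\<lambda>x. - h x"] V_der tT T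
      obtain z where z: "t < z" "z < t + \<delta>" "V (t + \<delta>) - V t = (t + \<delta> - t) * (- h z)" by force
      have "V (t + \<delta>) - V t \<le> - \<delta> * (e^2 / 4)" using z hz[of z] \<delta> by (simp add: mult_left_mono)
      moreover have "V t \<le> V T" using V_mono[of T t] tT T by auto
      moreover have "m \<le> V (t + \<delta>)" unfolding m_def using bdd tT T \<delta> by (intro cInf_lower) auto
      ultimately show False using T(2) by (simp add: \<eta>_def)
    qed
  qed
  thus "eventually (\<lambda>t. dist (nu i t - w) 0 < e) at_top"
    unfolding eventually_at_top_linorder by blast
qed

end
theorem mainTheorem10:
  fixes N :: nat and \<omega> :: "nat \<Rightarrow> real" and K \<epsilon> :: real
    and \<theta> :: "real \<Rightarrow> nat \<Rightarrow> real"
  assumes eps: "0 < \<epsilon>" "\<epsilon> < pi / 4"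
    and ode: "\<forall>i<N. \<forall>t\<ge>0. ((\<lambda>s. \<theta> s i) has_real_derivative
               (\<omega> i + K / real N * (\<Sum>j<N. sin (\<theta> t j - \<theta> t i)))) (at t within {0..})"
    and init: "\<forall>i<N. \<forall>j<N. \<bar>\<theta> 0 i - \<theta> 0 j\<bar> \<le> pi / 2 - 2 * \<epsilon>"
    and K: "K > real N * (Max (\<omega> ` {..<N}) - Min (\<omega> ` {..<N})) / (2 * cos (2 * \<epsilon>))"
  shows "\<forall>i<N. \<forall>j<N.
           ((\<lambda>t. deriv (\<lambda>s. \<theta> s i) t - deriv (\<lambda>s. \<theta> s j) t) \<longlongrightarrow> 0) at_top"
proof (cases "N = 0")
  case True thus ?thesis by simp
next
  case False
  interpret kur N \<omega> K \<epsilon> \<theta>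
    using False eps ode init K by unfold_locales auto
  show ?thesis
  proof (intro allI impI)
    fix i j assume ij: "i < N" "j < N"
    have "((\<lambda>t. (nu i t - w) - (nu j t - w)) \<longlongrightarrow> 0 - 0) at_top"
      by (intro tendsto_diff nu_conv ij)
    hence lim: "((\<lambda>t. (nu i t - w) - (nu j t - w)) \<longlongrightarrow> 0) at_top" by simp
    have ev: "eventually (\<lambda>t. (nu i t - w) - (nu j t - w) = deriv (\<lambda>s. \<theta> s i) t - deriv (\<lambda>s. \<theta> s j) t) at_top"
      using eventually_gt_at_top[of 0]
    proof (rule eventually_mono)
      fix t :: real assume "t > 0"
      thus "(nu i t - w) - (nu j t - w) = deriv (\<lambda>s. \<theta> s i) t - deriv (\<lambda>s. \<theta> s j) t"
        using DERIV_imp_deriv[OF der_at[OF ij(1)]] DERIV_imp_deriv[OF der_at[OF ij(2)]] by simp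
    qed
    show "((\<lambda>t. deriv (\<lambda>s. \<theta> s i) t - deriv (\<lambda>s. \<theta> s j) t) \<longlongrightarrow> 0) at_top"
      using lim tendsto_cong[OF ev] by simp
  qed
qed

end
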